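(* For every integer $n\ge 0$, the path $P_{n+2}$ on $n+2$ vertices belongs to ${\bf Forb}(\Gamma_{\le n})$; that is, $\gamma(P_{n+2})=n+1$ and $\gamma(P_{n+2}\setminus v)<\gamma(P_{n+2})$ for every vertex $v$.
   Context: For a finite graph $G$ and indeterminates $X_G=\{x_u : u\in V(G)\}$, the generalized Laplacian matrix $L(G,X_G)$ is the $V(G)\times V(G)$ matrix over $\mathbb{Z}[X_G]$ with $(u,u)$-entry $x_u$ and $(u,v)$-entry $-m_{uv}$ for $u\ne v$, $m_{uv}$ being the number of edges between $u$ and $v$. The $i$-th critical ideal $I_i(G,X_G)$ is the ideal of $\mathbb{Z}[X_G]$ generated by all $i\times i$ minors of $L(G,X_G)$ (with $I_i=\langle1\rangle$ for $i<1$, $I_i=\langle 0\rangle$ for $i>|V(G)|$). The algebraic co-rank $\gamma(G)$ is the number of critical ideals of $G$ equal to $\langle 1\rangle$. $\Gamma_{\le k}$ is the set of simple connected graphs with $\gamma\le k$; ${\bf Forb}(\Gamma_{\le k})$ is the set of minimal (under induced subgraphs) simple connected graphs $G$ with $\gamma(G)\ge k+1$, equivalently the simple connected graphs $G$ with $\gamma(G)=k+1$ and $\gamma(G\setminus v)<\gamma(G)$ for all vertices $v$. *)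

theory Defs
  imports "HOL-Library.Poly_Mapping" "Jordan_Normal_Form.Determinant"
begin

(* Multivariate integer polynomials Z[x_0, x_1, ...]: monomials are finitely supported
  exponent vectors nat =>0 nat, polynomials are finitely supported coefficient maps. *)
type_synonym ipoly = "(nat \<Rightarrow>\<^sub>0 nat) \<Rightarrow>\<^sub>0 int"

definition var :: "nat \<Rightarrow> ipoly" where
  "var u = Poly_Mapping.single (Poly_Mapping.single u 1) 1"

(* A simple graph on a finite vertex set V \<subseteq> nat, given by a symmetric irreflexive
  adjacency relation E (only its restriction to V matters). *)
definition gen_laplacian :: "(nat \<Rightarrow> nat \<Rightarrow> bool) \<Rightarrow> nat \<Rightarrow> nat \<Rightarrow> ipoly" where
  "gen_laplacian E u v = (if u = v then var u else if E u v then -1 else 0)"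

definition minor :: "(nat \<Rightarrow> nat \<Rightarrow> ipoly) \<Rightarrow> nat set \<Rightarrow> nat set \<Rightarrow> ipoly" where
  "minor M R C = det (mat (card R) (card C)
      (\<lambda>(k, l). M (sorted_list_of_set R ! k) (sorted_list_of_set C ! l)))"

definition gen_ideal :: "'a::comm_ring_1 set \<Rightarrow> 'a set" where
  "gen_ideal S = {x. \<exists>F f. finite F \<and> F \<subseteq> S \<and> x = (\<Sum>s\<in>F. f s * s)}"

definition crit_ideal :: "nat set \<Rightarrow> (nat \<Rightarrow> nat \<Rightarrow> bool) \<Rightarrow> nat \<Rightarrow> ipoly set" where
  "crit_ideal V E i = gen_ideal {minor (gen_laplacian E) R C | R C.
      R \<subseteq> V \<and> C \<subseteq> V \<and> card R = i \<and> card C = i}"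

definition gamma :: "nat set \<Rightarrow> (nat \<Rightarrow> nat \<Rightarrow> bool) \<Rightarrow> nat" where
  "gamma V E = card {i \<in> {1..card V}. crit_ideal V E i = UNIV}"

definition path_adj :: "nat \<Rightarrow> nat \<Rightarrow> bool" where
  "path_adj u v \<longleftrightarrow> u + 1 = v \<or> v + 1 = u"

definition path_vertices :: "nat \<Rightarrow> nat set" where
  "path_vertices m = {0..<m}"

end

theory Submission imports Defs "Jordan_Normal_Form.Char_Poly" begin

definition degm :: "(nat \<Rightarrow>\<^sub>0 nat) \<Rightarrow> nat" where
  "degm m = (\<Sum>i\<in>Poly_Mapping.keys m. Poly_Mapping.lookup m i)"

lemma degm_superset: "finite S \<Longrightarrow> Poly_Mapping.keys m \<subseteq> S \<Longrightarrow> degm m = (\<Sum>i\<in>S. Poly_Mapping.lookup m i)"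
  unfolding degm_def by (rule sum.mono_neutral_left) (auto simp: in_keys_iff)

lemma degm_add: "degm (a + b) = degm a + degm b"
proof -
  let ?S = "Poly_Mapping.keys a \<union> Poly_Mapping.keys b"
  have "Poly_Mapping.keys (a+b) \<subseteq> ?S" by (simp add: keys_add)
  then have "degm (a+b) = (\<Sum>i\<in>?S. Poly_Mapping.lookup (a+b) i)" by (intro degm_superset) auto
  also have "\<dots> = (\<Sum>i\<in>?S. Poly_Mapping.lookup a i) + (\<Sum>i\<in>?S. Poly_Mapping.lookup b i)"
    by (simp add: lookup_add sum.distrib)
  also have "\<dots> = degm a + degm b" by (subst (1 2) degm_superset[of ?S]) auto
  finally show ?thesis .
qed

lemma degm_single: "degm (Poly_Mapping.single u 1) = 1"
  unfolding degm_def by simp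

definition ev :: "ipoly \<Rightarrow> int poly" where
  "ev p = (\<Sum>m\<in>Poly_Mapping.keys p. monom (Poly_Mapping.lookup p m) (degm m))"

lemma ev_superset: "finite S \<Longrightarrow> Poly_Mapping.keys p \<subseteq> S \<Longrightarrow> ev p = (\<Sum>m\<in>S. monom (Poly_Mapping.lookup p m) (degm m))"
  unfolding ev_def by (rule sum.mono_neutral_left) (auto simp: in_keys_iff)

lemma ev_add: "ev (p + q) = ev p + ev q"
proof -
  let ?S = "Poly_Mapping.keys p \<union> Poly_Mapping.keys q"
  have "Poly_Mapping.keys (p+q) \<subseteq> ?S" by (simp add: keys_add)
  then have "ev (p+q) = (\<Sum>m\<in>?S. monom (Poly_Mapping.lookup (p+q) m) (degm m))" by (intro ev_superset) auto
  also have "\<dots> = (\<Sum>m\<in>?S. monom (Poly_Mapping.lookup p m) (degm m)) + (\<Sum>m\<in>?S. monom (Poly_Mapping.lookup q m) (degm m))"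
    by (simp add: lookup_add sum.distrib add_monom[symmetric])
  also have "\<dots> = ev p + ev q" by (subst (1 2) ev_superset[of ?S]) auto
  finally show ?thesis .
qed

lemma ev_zero: "ev 0 = 0" by (simp add: ev_def)

lemma ev_sum: "ev (sum f A) = (\<Sum>a\<in>A. ev (f a))"
  by (induction A rule: infinite_finite_induct) (auto simp: ev_zero ev_add)

lemma ev_single: "ev (Poly_Mapping.single k c) = monom c (degm k)"
  by (cases "c = 0") (auto simp: ev_def)

lemma pm_expand: "p = (\<Sum>k\<in>Poly_Mapping.keys p. Poly_Mapping.single k (Poly_Mapping.lookup p k))"
proof (rule poly_mapping_eqI)
  fix x
  show "Poly_Mapping.lookup p x = Poly_Mapping.lookup (\<Sum>k\<in>Poly_Mapping.keys p. Poly_Mapping.single k (Poly_Mapping.lookup p k)) x"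
    unfolding lookup_sum lookup_single when_def
    by (cases "x \<in> Poly_Mapping.keys p") (auto simp: in_keys_iff)
qed

lemma ev_mult: "ev (p * q) = ev p * ev q"
proof -
  have "p * q = (\<Sum>k\<in>Poly_Mapping.keys p. Poly_Mapping.single k (Poly_Mapping.lookup p k)) * (\<Sum>l\<in>Poly_Mapping.keys q. Poly_Mapping.single l (Poly_Mapping.lookup q l))"
    using pm_expand[of p] pm_expand[of q] by simp
  also have "\<dots> = (\<Sum>k\<in>Poly_Mapping.keys p. \<Sum>l\<in>Poly_Mapping.keys q. Poly_Mapping.single (k + l) (Poly_Mapping.lookup p k * Poly_Mapping.lookup q l))"
    by (simp only: sum_product mult_single)
  finally have "ev (p*q) = (\<Sum>k\<in>Poly_Mapping.keys p. \<Sum>l\<in>Poly_Mapping.keys q. monom (Poly_Mapping.lookup p k * Poly_Mapping.lookup q l) (degm k + degm l))"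
    by (simp only: ev_sum ev_single degm_add)
  also have "\<dots> = ev p * ev q"
    by (simp only: ev_def sum_product mult_monom)
  finally show ?thesis .
qed

lemma ev_one: "ev 1 = 1"
proof -
  have "ev (Poly_Mapping.single 0 1) = monom 1 (degm 0)" by (rule ev_single)
  then have "ev 1 = monom 1 (degm 0)" by (simp only: single_one)
  then show ?thesis by (simp add: degm_def one_pCons monom_0)
qed

interpretation ev: comm_ring_hom ev
  by unfold_locales (auto simp: ev_add ev_mult ev_one ev_zero)


lemma ev_var: "ev (var u) = [:0,1:]"
proof -
  have "ev (var u) = monom 1 1" by (simp only: var_def ev_single degm_single)
  then show ?thesis by (simp add: monom_altdef)
qed

lemma ev_minor_full:
  assumes "finite V"
  defines "k \<equiv> card V" and "vs \<equiv> sorted_list_of_set V"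
  shows "ev (minor (gen_laplacian E) V V) =
    char_poly (mat k k (\<lambda>(i,j). if i = j then 0 else if E (vs!i) (vs!j) then 1 else (0::int)))"
proof -
  let ?M = "mat k k (\<lambda>(i, j). gen_laplacian E (vs ! i) (vs ! j))"
  let ?B = "mat k k (\<lambda>(i,j). if i = j then 0 else if E (vs!i) (vs!j) then 1 else (0::int))"
  have dist: "distinct vs" and len: "length vs = k" using assms by auto
  have "map_mat ev ?M = char_poly_matrix ?B"
  proof (rule eq_matI)
    fix i j assume ij: "i < dim_row (char_poly_matrix ?B)" "j < dim_col (char_poly_matrix ?B)"
    then have i: "i < k" and j: "j < k" by (auto simp: char_poly_matrix_def)
    have neq: "i \<noteq> j \<Longrightarrow> vs ! i \<noteq> vs ! j" using dist i j len by (simp add: nth_eq_iff_index_eq)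
    show "map_mat ev ?M $$ (i, j) = char_poly_matrix ?B $$ (i, j)"
      using i j neq by (auto simp: char_poly_matrix_def gen_laplacian_def ev_var ev_zero ev.hom_uminus ev_one)
  qed (auto simp: char_poly_matrix_def)
  then have "det (map_mat ev ?M) = char_poly ?B" by (simp add: char_poly_def)
  then show ?thesis unfolding minor_def k_def vs_def by simp
qed

lemma top_ideal_proper:
  assumes "finite V" "V \<noteq> {}"
  shows "crit_ideal V E (card V) \<noteq> UNIV"
proof
  assume U: "crit_ideal V E (card V) = UNIV"
  define D where "D = minor (gen_laplacian E) V V"
  have gens: "{minor (gen_laplacian E) R C | R C. R \<subseteq> V \<and> C \<subseteq> V \<and> card R = card V \<and> card C = card V} = {D}"
  proof (rule equalityI; rule subsetI)
    fix x assume "x \<in> {minor (gen_laplacian E) R C | R C. R \<subseteq> V \<and> C \<subseteq> V \<and> card R = card V \<and> card C = card V}"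
    then obtain R C where "x = minor (gen_laplacian E) R C" "R \<subseteq> V" "C \<subseteq> V" "card R = card V" "card C = card V" by blast
    moreover then have "R = V" "C = V" using card_subset_eq[OF assms(1)] by auto
    ultimately show "x \<in> {D}" by (simp add: D_def)
  qed (auto simp: D_def)
  have "1 \<in> gen_ideal {D}" using U gens unfolding crit_ideal_def by simp
  then obtain F f where F: "finite F" "F \<subseteq> {D}" "1 = (\<Sum>s\<in>F. f s * s)"
    unfolding gen_ideal_def by auto
  have "F = {} \<or> F = {D}" using F(2) by auto
  then have one: "1 = f D * D" using F(3) by auto
  define k where "k = card V"
  define B where "B = mat k k (\<lambda>(i,j). if i = j then 0 else if E (sorted_list_of_set V!i) (sorted_list_of_set V!j) then 1 else (0::int))"
  have evD: "ev D = char_poly B" unfolding D_def B_def k_def by (rule ev_minor_full[OF assms(1)])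
  have Bc: "B \<in> carrier_mat k k" by (simp add: B_def)
  have degB: "degree (char_poly B) = k" using degree_monic_char_poly[OF Bc] by simp
  have kpos: "k > 0" using assms by (simp add: k_def card_gt_0_iff)
  have "1 = ev (f D) * char_poly B" using arg_cong[OF one, of ev] evD by (simp add: ev_mult ev_one)
  then have "degree (1::int poly) = degree (ev (f D) * char_poly B)" by simp
  moreover have "ev (f D) \<noteq> 0" "char_poly B \<noteq> 0" using \<open>1 = ev (f D) * char_poly B\<close>
    by (metis mult_zero_left one_neq_zero, metis mult_zero_right one_neq_zero)
  ultimately have "0 = degree (ev (f D)) + k" using degB by (simp add: degree_mult_eq)
  with kpos show False by simp
qed


lemma path_minor:
  "minor (gen_laplacian path_adj) {0..<i} {1..<i+1} = (-1)^i"
proof -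
  let ?A = "mat i i (\<lambda>(k, l). gen_laplacian path_adj k (l+1))"
  have "minor (gen_laplacian path_adj) {0..<i} {1..<i+1} = det ?A"
    unfolding minor_def by (intro arg_cong[where f=det] eq_matI) (auto simp: nth_upt simp del: upt_Suc)
  also have "det ?A = prod_list (diag_mat ?A)"
    by (rule det_lower_triangular[of i]) (auto simp: gen_laplacian_def path_adj_def)
  also have "diag_mat ?A = replicate i (-1)"
    by (rule nth_equalityI) (auto simp: diag_mat_def gen_laplacian_def path_adj_def)
  finally show ?thesis by simp
qed

lemma path_ideal_unit:
  assumes "1 \<le> i" "i < m"
  shows "crit_ideal (path_vertices m) path_adj i = UNIV"
proof -
  let ?D = "minor (gen_laplacian path_adj) {0..<i} {1..<i+1}"
  have mem: "?D \<in> {minor (gen_laplacian path_adj) R C | R C. R \<subseteq> path_vertices m \<and> C \<subseteq> path_vertices m \<and> card R = i \<and> card C = i}"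
    using assms apply (simp add: path_vertices_def)
    apply (rule exI[of _ "{0..<i}"], rule exI[of _ "{Suc 0..<Suc i}"]) by auto
  have "UNIV \<subseteq> crit_ideal (path_vertices m) path_adj i"
  proof (rule subsetI)
    fix x :: ipoly
    have pm: "?D = (-1)^i" by (rule path_minor)
    have "(\<Sum>s\<in>{?D}. (x * (-1)^i) * s) = (x * (-1)^i) * ?D"
      using sum.insert[OF finite.emptyI, of ?D "\<lambda>s. (x * (-1)^i) * s"]
      by (simp only: empty_iff not_False_eq_True sum.empty add_0_right simp_thms)
    also have "\<dots> = (x * (-1)^i) * (-1)^i"
      by (rule arg_cong[where f="\<lambda>y. (x * (-1)^i) * y", OF pm])
    also have "\<dots> = x * ((-1)^i * (-1)^i)" by (rule mult.assoc)
    also have "\<dots> = x" by (simp only: minus_one_mult_self mult_1_right)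
    finally have "x = (\<Sum>s\<in>{?D}. (x * (-1)^i) * s)" by (rule sym)
    moreover have "{?D} \<subseteq> {minor (gen_laplacian path_adj) R C | R C. R \<subseteq> path_vertices m \<and> C \<subseteq> path_vertices m \<and> card R = i \<and> card C = i}"
      using mem by (simp only: insert_subset empty_subsetI simp_thms)
    ultimately show "x \<in> crit_ideal (path_vertices m) path_adj i"
      unfolding crit_ideal_def gen_ideal_def mem_Collect_eq
      by (intro exI[of _ "{?D}"] exI[of _ "\<lambda>s. x * (-1)^i"] conjI finite.insertI finite.emptyI)
  qed
  then show ?thesis by blast
qed

theorem theorem5p1:
  fixes n :: nat
  shows "gamma (path_vertices (n + 2)) path_adj = n + 1 \<and>
    (\<forall>v \<in> path_vertices (n + 2).
       gamma (path_vertices (n + 2) - {v}) path_adj < gamma (path_vertices (n + 2)) path_adj)"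
proof -
  let ?m = "n + 2"
  let ?V = "path_vertices ?m"
  have cV: "card ?V = ?m" by (simp add: path_vertices_def)
  have top: "crit_ideal ?V path_adj ?m \<noteq> UNIV"
    using top_ideal_proper[of ?V path_adj] cV by (simp add: path_vertices_def)
  have S: "{i \<in> {1..card ?V}. crit_ideal ?V path_adj i = UNIV} = {1..<?m}"
    using top path_ideal_unit[of _ ?m] unfolding cV
    by (auto simp del: path_vertices_def) (metis UNIV_I le_neq_implies_less)
  have g: "gamma ?V path_adj = n + 1" unfolding gamma_def S by simp
  moreover have "gamma (?V - {v}) path_adj < gamma ?V path_adj" if v: "v \<in> ?V" for v
  proof -
    let ?W = "?V - {v}"
    have fW: "finite ?W" by (simp add: path_vertices_def)
    have cW: "card ?W = n + 1" using v cV by (simp add: path_vertices_def)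
    have "card ?W \<noteq> 0" using cW by simp
    then have "?W \<noteq> {}" by (metis card.empty)
    then have topW: "crit_ideal ?W path_adj (n+1) \<noteq> UNIV"
      using top_ideal_proper[OF fW] cW by simp
    have "{i \<in> {1..card ?W}. crit_ideal ?W path_adj i = UNIV} \<subseteq> {1..<n+1}"
      using topW unfolding cW by (auto simp del: path_vertices_def)
    then have "gamma ?W path_adj \<le> card {1..<n+1}" unfolding gamma_def
      by (intro card_mono) auto
    then show ?thesis using g by simp
  qed
  ultimately show ?thesis by blast
qed

end
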